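(* Let $p$ be an odd prime and let $P$ be the Paley matrix of order $p$. Then the $p^2\times p^2$ matrix \[H=P\otimes P+J\otimes I+\omega\, I\otimes J\] is a $BH(p^2,6)$ matrix, i.e. a complex Hadamard matrix of order $p^2$ all of whose entries are sixth roots of unity.
   Context: $\omega=e^{2\pi i/3}$. $I$ and $J$ denote the $p\times p$ identity and all-ones matrices, and $\otimes$ is the Kronecker product. The Paley matrix of order $p$ is the circulant matrix $P$ with $P_{i,j}=\chi(j-i)$ for $i,j\in\mathbb{Z}_p$, where $\chi(0)=0$, $\chi(k)=1$ if $k$ is a nonzero quadratic residue mod $p$ and $\chi(k)=-1$ otherwise. A complex Hadamard matrix of order $n$ is an $n\times n$ matrix with unimodular entries satisfying $HH^\ast=nI_n$; $BH(n,q)$ denotes such a matrix whose entries are $q$-th roots of unity. *)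

theory Defs
  imports "Jordan_Normal_Form.Schur_Decomposition" "HOL-Number_Theory.Number_Theory"
begin

text \<open>Kronecker product: entry ((i,k),(j,l)) of A (x) B is A(i,j) * B(k,l); the pair
  index (i,k) is encoded as i * dim_row B + k (resp. j * dim_col B + l).\<close>
definition kron :: "'a::times mat \<Rightarrow> 'a mat \<Rightarrow> 'a mat" where
  "kron A B = mat (dim_row A * dim_row B) (dim_col A * dim_col B)
     (\<lambda>(i,j). A $$ (i div dim_row B, j div dim_col B) * B $$ (i mod dim_row B, j mod dim_col B))"

definition ones_mat :: "nat \<Rightarrow> complex mat" where
  "ones_mat n = mat n n (\<lambda>_. 1)"

definition paley_mat :: "nat \<Rightarrow> complex mat" where
  "paley_mat p = mat p p (\<lambda>(i,j). of_int (Legendre (int j - int i) (int p)))"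

definition omega :: complex where
  "omega = cis (2 * pi / 3)"

definition complex_hadamard :: "nat \<Rightarrow> complex mat \<Rightarrow> bool" where
  "complex_hadamard n H \<longleftrightarrow> H \<in> carrier_mat n n \<and>
     (\<forall>i<n. \<forall>j<n. cmod (H $$ (i,j)) = 1) \<and>
     H * mat_adjoint H = of_nat n \<cdot>\<^sub>m 1\<^sub>m n"

definition butson_hadamard :: "nat \<Rightarrow> nat \<Rightarrow> complex mat \<Rightarrow> bool" where
  "butson_hadamard n q H \<longleftrightarrow> complex_hadamard n H \<and>
     (\<forall>i<n. \<forall>j<n. (H $$ (i,j)) ^ q = 1)"

end

theory Submission
  imports Defs
begin

lemma leg_cong: assumes "[a = b] (mod m)" shows "Legendre a m = Legendre b m"
proof -
  have 1: "QuadRes m a = QuadRes m b" unfolding QuadRes_def using assms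
    by (meson cong_sym cong_trans)
  have 2: "[a = 0] (mod m) = [b = 0] (mod m)" using assms
    by (meson cong_sym cong_trans)
  show ?thesis unfolding Legendre_def using 1 2 by simp
qed

lemma leg_mod: "Legendre (a mod m) m = Legendre a m"
  by (rule leg_cong) (simp add: cong_def)

lemma leg_vals: "Legendre a m \<in> {-1,0,1}"
  unfolding Legendre_def by simp

lemma leg_one: assumes "m > 1" shows "Legendre 1 m = 1"
proof -
  have "QuadRes m 1" unfolding QuadRes_def by (rule exI[of _ 1]) simp
  moreover have "\<not> [1 = 0] (mod m)" using assms by (simp add: cong_def)
  ultimately show ?thesis unfolding Legendre_def by simp
qed

lemma leg_sq: "\<not> [a = 0] (mod m) \<Longrightarrow> (Legendre a m)^2 = 1"
  unfolding Legendre_def by simp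

lemma leg_zero_iff: "Legendre a m = 0 \<longleftrightarrow> [a = 0] (mod m)"
  unfolding Legendre_def by simp
lemma leg_mult:
  assumes "prime p" "2 < p"
  shows "Legendre (a*b) (int p) = Legendre a (int p) * Legendre b (int p)"
proof -
  have 1: "[Legendre (a*b) (int p) = (a*b) ^ ((p - 1) div 2)] (mod p)"
    using euler_criterion assms by blast
  have 2: "[Legendre a (int p) * Legendre b (int p) = a ^ ((p - 1) div 2) * b ^ ((p - 1) div 2)] (mod p)"
    using euler_criterion[OF assms] cong_mult by blast
  have "[Legendre (a*b) (int p) = Legendre a (int p) * Legendre b (int p)] (mod p)"
    using 1 2 by (metis cong_sym cong_trans power_mult_distrib)
  then have d: "int p dvd Legendre (a*b) (int p) - Legendre a (int p) * Legendre b (int p)"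
    by (simp add: cong_iff_dvd_diff)
  have r: "Legendre (a*b) (int p) - Legendre a (int p) * Legendre b (int p) \<in> {-2,-1,0,1,2}"
    using leg_vals[of "a*b" "int p"] leg_vals[of a "int p"] leg_vals[of b "int p"] by auto
  have "int p \<ge> 3" using assms by simp
  have z: "\<And>x::int. x \<in> {-2,-1,0,1,2} \<Longrightarrow> int p dvd x \<Longrightarrow> x = 0"
  proof -
    fix x :: int assume x: "x \<in> {-2,-1,0,1,2}" and dv: "int p dvd x"
    show "x = 0"
    proof (rule ccontr)
      assume "x \<noteq> 0"
      then have "\<bar>int p\<bar> \<le> \<bar>x\<bar>" using dvd_imp_le_int[OF _ dv] by simp
      with x \<open>int p \<ge> 3\<close> show False by auto
    qed
  qed
  have "Legendre (a*b) (int p) - Legendre a (int p) * Legendre b (int p) = 0" using z[OF r d] .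
  then show ?thesis by simp
qed

lemma nonres_exists:
  assumes "prime p" "odd p"
  shows "\<exists>g. Legendre g (int p) = -1"
proof -
  obtain g where g: "residue_primroot p g" using prime_primitive_root_exists[of p] assms prime_gt_1_nat by blast
  have p2: "2 < p" using assms prime_ge_2_nat[of p] by presburger
  have cop: "coprime p g" and og: "ord p g = p - 1"
    using g assms by (auto simp: residue_primroot_def totient_prime)
  have nz: "\<not> [int g = 0] (mod int p)"
  proof
    assume "[int g = 0] (mod int p)"
    then have "p dvd g" by (metis cong_0_iff of_nat_dvd_iff)
    with cop have "p dvd 1" by (metis coprime_common_divisor dvd_refl)
    with assms show False by simp
  qed
  show ?thesis
  proof (rule ccontr)
    assume "\<not> ?thesis"
    then have ne: "Legendre (int g) (int p) \<noteq> -1" by blast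
    then have "Legendre (int g) (int p) = 1" using nz unfolding Legendre_def by (simp split: if_splits)
    then have "[1 = int g ^ ((p - 1) div 2)] (mod int p)"
      using euler_criterion[OF assms(1) p2, of "int g"] by simp
    then have "[g ^ ((p - 1) div 2) = 1] (mod p)"
      by (metis cong_int_iff cong_sym of_nat_1 of_nat_power)
    then have "ord p g dvd (p - 1) div 2" using ord_divides by blast
    moreover have "(p - 1) div 2 > 0" using p2 by simp
    ultimately have "p - 1 \<le> (p - 1) div 2" using og by (metis dvd_imp_le)
    with p2 show False by simp
  qed
qed



lemma cop_of_ncong:
  assumes "prime p" "\<not> [d = 0] (mod int p)" shows "coprime d (int p)"
proof -
  have "prime (int p)" using assms by simp
  moreover have "\<not> int p dvd d" using assms(2) by (simp add: cong_0_iff)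
  ultimately show ?thesis by (metis prime_imp_coprime coprime_commute)
qed

lemma reindex_modp:
  fixes p :: nat and f :: "int \<Rightarrow> 'b::comm_monoid_add" and \<phi> :: "nat \<Rightarrow> int"
  assumes p: "p > 0"
    and inj: "\<And>j k. j < p \<Longrightarrow> k < p \<Longrightarrow> [\<phi> j = \<phi> k] (mod int p) \<Longrightarrow> j = k"
    and per: "\<And>a. f (a mod int p) = f a"
  shows "(\<Sum>j\<in>{0..<p}. f (\<phi> j)) = (\<Sum>j\<in>{0..<p}. f (int j))"
proof -
  define \<psi> where "\<psi> j = nat (\<phi> j mod int p)" for j
  have injp: "inj_on \<psi> {0..<p}"
  proof (rule inj_onI)
    fix j k assume j: "j \<in> {0..<p}" and k: "k \<in> {0..<p}" and e: "\<psi> j = \<psi> k"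
    have "\<phi> j mod int p = \<phi> k mod int p"
      using e p unfolding \<psi>_def by (simp add: nat_eq_iff)
    then show "j = k" using inj j k by (simp add: cong_def)
  qed
  have sub: "\<psi> ` {0..<p} \<subseteq> {0..<p}" using p unfolding \<psi>_def
    by (auto simp: nat_less_iff)
  have im: "\<psi> ` {0..<p} = {0..<p}" using endo_inj_surj[OF _ sub injp] by simp
  have "(\<Sum>j\<in>{0..<p}. f (int j)) = (\<Sum>j\<in>\<psi> ` {0..<p}. f (int j))" using im by simp
  also have "\<dots> = (\<Sum>j\<in>{0..<p}. f (int (\<psi> j)))" by (simp add: sum.reindex[OF injp])
  also have "\<dots> = (\<Sum>j\<in>{0..<p}. f (\<phi> j))"
    by (rule sum.cong) (use p per in \<open>auto simp: \<psi>_def\<close>)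
  finally show ?thesis by simp
qed


context
  fixes p :: nat
  assumes pp: "prime p" and po: "odd p"
begin

lemma p2: "2 < p" using pp po prime_ge_2_nat[of p] by presburger

lemma chi_per: "Legendre (a mod int p) (int p) = Legendre a (int p)"
  by (rule leg_mod)

lemma sum_chi0: "(\<Sum>j\<in>{0..<p}. Legendre (int j) (int p)) = 0"
proof -
  obtain g where g: "Legendre g (int p) = -1" using nonres_exists pp po by blast
  have gnz: "\<not> [g = 0] (mod int p)" using g by (simp add: leg_zero_iff[symmetric])
  have cop: "coprime g (int p)" using cop_of_ncong[OF pp gnz] .
  have "(\<Sum>j\<in>{0..<p}. Legendre (int j * g) (int p)) = (\<Sum>j\<in>{0..<p}. Legendre (int j) (int p))"
  proof (rule reindex_modp[where f = "\<lambda>x. Legendre x (int p)"])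
    show "p > 0" using p2 by simp
    fix j k assume j: "j < p" and k: "k < p" and c: "[int j * g = int k * g] (mod int p)"
    then have "[int j = int k] (mod int p)" using cong_mult_rcancel[OF cop] by blast
    then show "j = k" using j k by (simp add: cong_def)
  next
    fix a show "Legendre (a mod int p) (int p) = Legendre a (int p)" by (rule leg_mod)
  qed
  moreover have "(\<Sum>j\<in>{0..<p}. Legendre (int j * g) (int p)) = - (\<Sum>j\<in>{0..<p}. Legendre (int j) (int p))"
    using leg_mult[OF pp p2] g by (simp add: sum_negf)
  ultimately show ?thesis by simp
qed

lemma sum_chi_shift: "(\<Sum>j\<in>{0..<p}. Legendre (int j - c) (int p)) = 0"
proof -
  have "(\<Sum>j\<in>{0..<p}. Legendre (int j - c) (int p)) = (\<Sum>j\<in>{0..<p}. Legendre (int j) (int p))"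
  proof (rule reindex_modp[where f = "\<lambda>x. Legendre x (int p)"])
    show "p > 0" using p2 by simp
    fix j k assume j: "j < p" and k: "k < p" and c: "[int j - c = int k - c] (mod int p)"
    then have "[int j = int k] (mod int p)" using cong_add[OF c cong_refl[of c]] by simp
    then show "j = k" using j k by (simp add: cong_def)
  next
    fix a show "Legendre (a mod int p) (int p) = Legendre a (int p)" by (rule leg_mod)
  qed
  then show ?thesis using sum_chi0 by simp
qed

end

context
  fixes p :: nat
  assumes pp: "prime p" and po: "odd p"
begin

lemma ncong1: "\<not> [1 = (0::int)] (mod int p)"
  using p2[OF pp po] by (simp add: cong_def)

lemma inv_ex: assumes "0 < y" "y < p" shows "\<exists>u. [int y * u = 1] (mod int p)"
proof -
  have "\<not> [int y = 0] (mod int p)" using assms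
    by (auto simp: cong_0_iff dest: zdvd_imp_le)
  then have "coprime (int y) (int p)" using cop_of_ncong[OF pp] by blast
  then show ?thesis using cong_solve_coprime_int by blast
qed

lemma jac0:
  assumes dnz: "\<not> [d = 0] (mod int p)"
  shows "(\<Sum>y\<in>{0..<p}. Legendre (int y) (int p) * Legendre (int y + d) (int p)) = -1"
proof -
  define u where "u y = (SOME u. [int y * u = 1] (mod int p))" for y
  have u: "[int y * u y = 1] (mod int p)" if "0 < y" "y < p" for y
    unfolding u_def using someI_ex[OF inv_ex[OF that]] .
  have unz: "\<not> [u y = 0] (mod int p)" if "0 < y" "y < p" for y
  proof
    assume "[u y = 0] (mod int p)"
    then have "[int y * u y = int y * 0] (mod int p)" by (rule cong_scalar_left)
    then have "[1 = 0] (mod int p)" using u[OF that] by (metis cong_sym cong_trans mult_zero_right)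
    then show False using ncong1 by blast
  qed
  have cd: "coprime d (int p)" using cop_of_ncong[OF pp dnz] .
  define \<phi> where "\<phi> y = (if y = 0 then 1 else 1 + d * u y)" for y
  have p2': "2 < p" using p2[OF pp po] .
  have eq: "Legendre (int y) (int p) * Legendre (int y + d) (int p)
      = Legendre (\<phi> y) (int p) - (if y = 0 then 1 else 0)" if "y < p" for y
  proof (cases "y = 0")
    case True
    have "Legendre 0 (int p) = 0" by (simp add: leg_zero_iff)
    moreover have "Legendre 1 (int p) = 1" using p2' by (simp add: leg_one)
    ultimately show ?thesis using True by (simp add: \<phi>_def)
  next
    case False
    then have y0: "0 < y" by simp
    have sq: "(Legendre (u y) (int p))^2 = 1" using leg_sq unz[OF y0 that] by blast
    have "Legendre (int y) (int p) * Legendre (int y + d) (int p)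
        = (Legendre (u y) (int p))^2 * (Legendre (int y) (int p) * Legendre (int y + d) (int p))"
      using sq by simp
    also have "\<dots> = Legendre (u y * int y) (int p) * Legendre (u y * (int y + d)) (int p)"
      by (simp only: leg_mult[OF pp p2'], simp add: power2_eq_square algebra_simps)
    also have "Legendre (u y * int y) (int p) = 1"
    proof -
      have "[u y * int y = 1] (mod int p)" using u[OF y0 that] by (simp add: mult.commute)
      then have "Legendre (u y * int y) (int p) = Legendre 1 (int p)" by (rule leg_cong)
      then show ?thesis using p2' by (simp add: leg_one)
    qed
    also have "Legendre (u y * (int y + d)) (int p) = Legendre (\<phi> y) (int p)"
    proof -
      have "[int y * u y + d * u y = 1 + d * u y] (mod int p)"
        using cong_add[OF u[OF y0 that] cong_refl[of "d * u y"]] .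
      then have "[u y * (int y + d) = \<phi> y] (mod int p)"
        using False by (simp add: \<phi>_def algebra_simps)
      then show ?thesis by (rule leg_cong)
    qed
    finally show ?thesis using False by simp
  qed
  have inj: "j = k" if j: "j < p" and k: "k < p" and c: "[\<phi> j = \<phi> k] (mod int p)" for j k
  proof -
    have case0: False if a: "0 < k" "k < p" and c0: "[1 = 1 + d * u k] (mod int p)" for k
    proof -
      have "[1 + 0 = 1 + d * u k] (mod int p)" using c0 by simp
      then have "[0 = d * u k] (mod int p)" using cong_add_lcancel by blast
      then have "int p dvd d * u k" by (metis cong_0_iff cong_sym)
      then have "int p dvd d \<or> int p dvd u k" using pp by (simp add: prime_dvd_mult_iff)
      then show False using dnz unz[OF a] by (auto simp: cong_0_iff)
    qed
    show ?thesis
    proof (cases "j = 0")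
      case True
      show ?thesis
      proof (rule ccontr)
        assume "j \<noteq> k"
        then have "0 < k" using True by simp
        moreover have "[1 = 1 + d * u k] (mod int p)" using c True \<open>j \<noteq> k\<close> by (simp add: \<phi>_def)
        ultimately show False using case0 k by blast
      qed
    next
      case False
      show ?thesis
      proof (cases "k = 0")
        case True
        have "[1 = 1 + d * u j] (mod int p)" using c True False by (simp add: \<phi>_def cong_sym_eq)
        then show ?thesis using case0 j False by blast
      next
        case k0: False
        have "[1 + d * u j = 1 + d * u k] (mod int p)" using c False k0 by (simp add: \<phi>_def)
        then have "[d * u j = d * u k] (mod int p)" using cong_add_lcancel by blast
        then have cu: "[u j = u k] (mod int p)" using cong_mult_lcancel[OF cd] by blast
        have uj: "[int j * u j = 1] (mod int p)" using u j False by simp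
        have uk: "[int k * u k = 1] (mod int p)" using u k k0 by simp
        have "[int j * (int k * u k) = int j * 1] (mod int p)" using uk by (rule cong_scalar_left)
        moreover have "[int k * (int j * u j) = int k * 1] (mod int p)" using uj by (rule cong_scalar_left)
        moreover have "[int j * (int k * u k) = int k * (int j * u j)] (mod int p)"
        proof -
          have "[int j * int k * u k = int j * int k * u j] (mod int p)"
            using cong_scalar_left[OF cu, of "int j * int k"] by (simp add: cong_sym_eq)
          then show ?thesis by (simp add: algebra_simps)
        qed
        ultimately have "[int j = int k] (mod int p)"
          by (metis cong_sym cong_trans mult.right_neutral)
        then show ?thesis using j k by (simp add: cong_def)
      qed
    qed
  qed
  have "(\<Sum>y\<in>{0..<p}. Legendre (\<phi> y) (int p)) = (\<Sum>y\<in>{0..<p}. Legendre (int y) (int p))"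
    by (rule reindex_modp[where f = "\<lambda>x. Legendre x (int p)"]) (use p2' inj leg_mod in auto)
  also have "\<dots> = 0" using sum_chi0[OF pp po] .
  finally have s0: "(\<Sum>y\<in>{0..<p}. Legendre (\<phi> y) (int p)) = 0" .
  have "(\<Sum>y\<in>{0..<p}. Legendre (int y) (int p) * Legendre (int y + d) (int p))
      = (\<Sum>y\<in>{0..<p}. Legendre (\<phi> y) (int p) - (if y = 0 then 1 else 0))"
    by (rule sum.cong) (use eq in auto)
  also have "\<dots> = (\<Sum>y\<in>{0..<p}. Legendre (\<phi> y) (int p)) - (\<Sum>y\<in>{0..<p}. (if y = 0 then 1 else 0))"
    by (simp add: sum_subtractf)
  also have "(\<Sum>y\<in>{0..<p}. (if y = 0 then 1 else 0)::int) = 1" using p2' by simp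
  finally show ?thesis using s0 by simp
qed

end


lemma ndvd_diff: assumes "j < p" "i < p" "int p dvd int j - int i" shows "j = i"
proof (rule ccontr)
  assume "j \<noteq> i"
  then have "int j - int i \<noteq> 0" by simp
  then have "\<bar>int p\<bar> \<le> \<bar>int j - int i\<bar>" using dvd_imp_le_int assms(3) by blast
  with assms(1,2) show False by auto
qed

lemma omega_Complex: "omega = Complex (-1/2) (sqrt 3 / 2)"
  by (simp add: omega_def complex_eq_iff cos_120 sin_120)

lemma one_omega: "1 + omega = cis (pi/3)"
  by (simp add: omega_Complex complex_eq_iff cos_60 sin_60)

lemma omega_cnj: "omega * cnj omega = 1" "omega + cnj omega = -1" "cnj omega * omega = 1"
  unfolding omega_Complex by (simp_all add: complex_eq_iff power2_eq_square)

lemma omega_norm: "cmod omega = 1" unfolding omega_def by simp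
lemma one_omega_norm: "cmod (1 + omega) = 1" unfolding one_omega by simp

lemma omega_pow6: "omega ^ 6 = 1"
proof -
  have "omega ^ 6 = cis (2 * pi * of_int 2)" unfolding omega_def DeMoivre by (simp add: field_simps)
  then show ?thesis by (simp del: of_int_numeral)
qed

lemma one_omega_pow6: "(1 + omega) ^ 6 = 1"
  unfolding one_omega DeMoivre by simp

context
  fixes p :: nat
  assumes pp: "prime p" and po: "odd p"
begin

lemma R1: "i < p \<Longrightarrow> (\<Sum>j\<in>{0..<p}. Legendre (int j - int i) (int p)) = 0"
  using sum_chi_shift[OF pp po] by blast

lemma R2: assumes i: "i < p" and i': "i' < p"
  shows "(\<Sum>j\<in>{0..<p}. Legendre (int j - int i) (int p) * Legendre (int j - int i') (int p))
     = (if i = i' then int p - 1 else -1)"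
proof (cases "i = i'")
  case True
  have "(\<Sum>j\<in>{0..<p}. Legendre (int j - int i) (int p) * Legendre (int j - int i') (int p))
      = (\<Sum>j\<in>{0..<p}. (if j = i then 0 else 1))"
  proof (rule sum.cong)
    fix j assume j: "j \<in> {0..<p}"
    show "Legendre (int j - int i) (int p) * Legendre (int j - int i') (int p) = (if j = i then 0 else 1)"
    proof (cases "j = i")
      case True then show ?thesis by (simp add: leg_zero_iff)
    next
      case False
      have "\<not> [int j - int i = 0] (mod int p)" using False j i ndvd_diff
        by (auto simp: cong_0_iff)
      then have "(Legendre (int j - int i) (int p))^2 = 1" by (rule leg_sq)
      then show ?thesis using False \<open>i = i'\<close> by (simp add: power2_eq_square)
    qed
  qed simp
  also have "\<dots> = int p - 1"
  proof -
    have "card ({0..<p} \<inter> - {i}) = p - 1" using i by (simp add: Diff_eq[symmetric] card_Diff_singleton)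
    then show ?thesis using i by (simp add: sum.If_cases of_nat_diff)
  qed
  finally show ?thesis using True by simp
next
  case False
  define d where "d = int i - int i'"
  have dnz: "\<not> [d = 0] (mod int p)" using False i i' ndvd_diff unfolding d_def
    by (auto simp: cong_0_iff)
  have "(\<Sum>j\<in>{0..<p}. Legendre (int j - int i) (int p) * Legendre (int j - int i') (int p))
     = (\<Sum>j\<in>{0..<p}. Legendre (int j - int i) (int p) * Legendre ((int j - int i) + d) (int p))"
    by (rule sum.cong) (simp_all add: d_def)
  also have "\<dots> = (\<Sum>j\<in>{0..<p}. Legendre (int j) (int p) * Legendre (int j + d) (int p))"
  proof (rule reindex_modp[where \<phi> = "\<lambda>j. int j - int i" and f = "\<lambda>x. Legendre x (int p) * Legendre (x + d) (int p)"])
    show "p > 0" using i by simp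
    fix j k assume j: "j < p" and k: "k < p" and c: "[int j - int i = int k - int i] (mod int p)"
    then have "[int j = int k] (mod int p)" using cong_add[OF c cong_refl[of "int i"]] by simp
    then show "j = k" using j k by (simp add: cong_def)
  next
    fix a
    have "[a mod int p + d = a + d] (mod int p)"
      by (simp add: cong_def mod_simps)
    then show "Legendre (a mod int p) (int p) * Legendre (a mod int p + d) (int p) =
          Legendre a (int p) * Legendre (a + d) (int p)"
      using leg_mod leg_cong by metis
  qed
  also have "\<dots> = -1" using jac0[OF pp po dnz] .
  finally show ?thesis using False by simp
qed

end


definition hf :: "nat \<Rightarrow> nat \<Rightarrow> nat \<Rightarrow> nat \<Rightarrow> nat \<Rightarrow> complex" where
  "hf p i k j l = of_int (Legendre (int j - int i) (int p)) * of_int (Legendre (int l - int k) (int p))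
     + (if k = l then 1 else 0) + omega * (if i = j then 1 else 0)"

lemma dsum: "(\<Sum>j\<in>A. \<Sum>l\<in>B. f j * g l) = sum f A * (sum g B :: complex)"
  by (simp add: sum_product)

context
  fixes p :: nat
  assumes pp: "prime p" and po: "odd p"
begin

lemma hf_orth:
  assumes i: "i < p" and k: "k < p" and i': "i' < p" and k': "k' < p"
  shows "(\<Sum>j\<in>{0..<p}. \<Sum>l\<in>{0..<p}. hf p i k j l * cnj (hf p i' k' j l))
     = (if i = i' \<and> k = k' then of_nat (p^2) else 0)"
proof -
  define X where "X j = (of_int (Legendre (int j - int i) (int p)) :: complex)" for j
  define X' where "X' j = (of_int (Legendre (int j - int i') (int p)) :: complex)" for j
  define Y where "Y l = (of_int (Legendre (int l - int k) (int p)) :: complex)" for l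
  define Y' where "Y' l = (of_int (Legendre (int l - int k') (int p)) :: complex)" for l
  define Z where "Z l = (if k = l then 1 else 0 :: complex)" for l
  define Z' where "Z' l = (if k' = l then 1 else 0 :: complex)" for l
  define W where "W j = omega * (if i = j then 1 else 0 :: complex)" for j
  define W' where "W' j = cnj omega * (if i' = j then 1 else 0 :: complex)" for j
  define U where "U (j::nat) = (1::complex)" for j
  have h1: "hf p i k j l = X j * Y l + Z l + W j" for j l
    unfolding hf_def X_def Y_def Z_def W_def by simp
  have h2: "cnj (hf p i' k' j l) = X' j * Y' l + Z' l + W' j" for j l
    unfolding hf_def X'_def Y'_def Z'_def W'_def by simp
  have pt: "hf p i k j l * cnj (hf p i' k' j l) =
      (X j * X' j) * (Y l * Y' l) + X j * (Y l * Z' l) + (X j * W' j) * Y l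
    + X' j * (Z l * Y' l) + U j * (Z l * Z' l) + W' j * Z l
    + (W j * X' j) * Y' l + W j * Z' l + (W j * W' j) * U l" for j l
    unfolding h1 h2 U_def by (simp add: algebra_simps)
  have sX: "sum X {0..<p} = 0" unfolding X_def using R1[OF pp po i] by (metis of_int_0 of_int_sum)
  have sX': "sum X' {0..<p} = 0" unfolding X'_def using R1[OF pp po i'] by (metis of_int_0 of_int_sum)
  have sY: "sum Y {0..<p} = 0" unfolding Y_def using R1[OF pp po k] by (metis of_int_0 of_int_sum)
  have sY': "sum Y' {0..<p} = 0" unfolding Y'_def using R1[OF pp po k'] by (metis of_int_0 of_int_sum)
  have sXX: "(\<Sum>j\<in>{0..<p}. X j * X' j) = (if i = i' then of_nat p - 1 else -1)"
  proof -
    have "(\<Sum>j\<in>{0..<p}. X j * X' j) = of_int (\<Sum>j\<in>{0..<p}. Legendre (int j - int i) (int p) * Legendre (int j - int i') (int p))"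
      unfolding X_def X'_def by simp
    also have "\<dots> = of_int (if i = i' then int p - 1 else -1)" using R2[OF pp po i i'] by simp
    finally show ?thesis by simp
  qed
  have sYY: "(\<Sum>l\<in>{0..<p}. Y l * Y' l) = (if k = k' then of_nat p - 1 else -1)"
  proof -
    have "(\<Sum>l\<in>{0..<p}. Y l * Y' l) = of_int (\<Sum>l\<in>{0..<p}. Legendre (int l - int k) (int p) * Legendre (int l - int k') (int p))"
      unfolding Y_def Y'_def by simp
    also have "\<dots> = of_int (if k = k' then int p - 1 else -1)" using R2[OF pp po k k'] by simp
    finally show ?thesis by simp
  qed
  have sU: "sum U {0..<p} = of_nat p" unfolding U_def by simp
  have sZZ: "(\<Sum>l\<in>{0..<p}. Z l * Z' l) = (if k = k' then 1 else 0)"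
    unfolding Z_def Z'_def using k by (auto simp: if_distrib cong: if_cong)
  have sWZ: "sum W' {0..<p} * sum Z {0..<p} = cnj omega"
    unfolding W'_def Z_def using i' k by (simp add: sum_distrib_left[symmetric] sum.delta sum.delta')
  have sWZ': "sum W {0..<p} * sum Z' {0..<p} = omega"
    unfolding W_def Z'_def using i k' by (simp add: sum_distrib_left[symmetric] sum.delta sum.delta')
  have sWW: "(\<Sum>j\<in>{0..<p}. W j * W' j) = (if i = i' then 1 else 0)"
  proof -
    have "\<And>j. W j * W' j = (if i' = j then (if i = i' then 1 else 0) else 0)"
      unfolding W_def W'_def using omega_cnj(1) by auto
    then show ?thesis using i' by (simp add: sum.delta')
  qed
  have "(\<Sum>j\<in>{0..<p}. \<Sum>l\<in>{0..<p}. hf p i k j l * cnj (hf p i' k' j l))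
      = (\<Sum>j\<in>{0..<p}. X j * X' j) * (\<Sum>l\<in>{0..<p}. Y l * Y' l)
      + sum X {0..<p} * (\<Sum>l\<in>{0..<p}. Y l * Z' l)
      + (\<Sum>j\<in>{0..<p}. X j * W' j) * sum Y {0..<p}
      + sum X' {0..<p} * (\<Sum>l\<in>{0..<p}. Z l * Y' l)
      + sum U {0..<p} * (\<Sum>l\<in>{0..<p}. Z l * Z' l)
      + sum W' {0..<p} * sum Z {0..<p}
      + (\<Sum>j\<in>{0..<p}. W j * X' j) * sum Y' {0..<p}
      + sum W {0..<p} * sum Z' {0..<p}
      + (\<Sum>j\<in>{0..<p}. W j * W' j) * sum U {0..<p}"
    unfolding pt by (simp only: sum.distrib dsum)
  also have "\<dots> = (if i = i' then of_nat p - 1 else -1) * (if k = k' then of_nat p - 1 else -1)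
      + of_nat p * (if k = k' then 1 else 0) + cnj omega + omega + (if i = i' then 1 else 0) * of_nat p"
    unfolding sXX sYY sX sX' sY sY' sU sZZ sWZ sWZ' sWW by simp
  also have "\<dots> = (if i = i' \<and> k = k' then of_nat (p^2) else 0)"
  proof -
    have oc: "cnj omega = -1 - omega" using omega_cnj(2) by (simp add: algebra_simps eq_neg_iff_add_eq_0)
    show ?thesis by (auto simp: oc algebra_simps power2_eq_square)
  qed
  finally show ?thesis .
qed

end


lemma pp_h1: "a < p*p \<Longrightarrow> a mod p < (p::nat)" by (cases "p = 0") auto

lemma pp_h2: assumes "a < p" "b < p" shows "a*p + b < p*(p::nat)"
proof -
  have "a*p + b < a*p + p" using assms by simp
  also have "\<dots> = Suc a * p" by simp
  also have "\<dots> \<le> p * p" using mult_le_mono1[OF Suc_leI[OF assms(1)], of p] by simp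
  finally show ?thesis .
qed

lemma sum_pp: "(\<Sum>t\<in>{0..<p*p}. g t) = (\<Sum>j\<in>{0..<p}. \<Sum>l\<in>{0..<p}. g (j*p + l))" for p :: nat and g :: "nat \<Rightarrow> 'a::comm_monoid_add"
proof -
  have "(\<Sum>t\<in>{0..<p*p}. g t) = (\<Sum>(j,l)\<in>{0..<p}\<times>{0..<p}. g (j*p + l))"
    by (rule sum.reindex_bij_witness[where i = "\<lambda>(j,l). j*p + l" and j = "\<lambda>t. (t div p, t mod p)"])
       (auto simp: less_mult_imp_div_less pp_h1 pp_h2)
  also have "\<dots> = (\<Sum>j\<in>{0..<p}. \<Sum>l\<in>{0..<p}. g (j*p + l))"
    by (simp add: sum.cartesian_product)
  finally show ?thesis .
qed



lemma adj_carrier: "A \<in> carrier_mat n n \<Longrightarrow> mat_adjoint A \<in> carrier_mat n n"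
  unfolding mat_adjoint_def by (simp add: mat_of_rows_def)

lemma adj_idx: "A \<in> carrier_mat n n \<Longrightarrow> i < n \<Longrightarrow> j < n \<Longrightarrow> mat_adjoint A $$ (i,j) = cnj (A $$ (j,i))"
  unfolding mat_adjoint_def by (simp add: mat_of_rows_index)

context
  fixes p :: nat
  assumes pp: "prime p" and po: "odd p"
begin

lemma hf_vals: assumes "i < p" "k < p" "j < p" "l < p"
  shows "hf p i k j l \<in> {1, -1, omega, 1 + omega}"
proof -
  have l0: "Legendre 0 (int p) = 0" by (simp add: leg_zero_iff)
  have nz: "Legendre (int a - int b) (int p) \<in> {1, -1}" if "a < p" "b < p" "a \<noteq> b" for a b
  proof -
    have "\<not> [int a - int b = 0] (mod int p)" using that ndvd_diff by (auto simp: cong_0_iff)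
    then have "Legendre (int a - int b) (int p) \<noteq> 0" by (simp add: leg_zero_iff)
    then show ?thesis using leg_vals[of "int a - int b" "int p"] by auto
  qed
  show ?thesis
  proof (cases "i = j")
    case True
    then show ?thesis using l0 by (auto simp: hf_def)
  next
    case False
    note f = False
    show ?thesis
    proof (cases "k = l")
      case True
      then show ?thesis using l0 f by (auto simp: hf_def)
    next
      case False
      then show ?thesis using nz[of j i] nz[of l k] f assms by (auto simp: hf_def)
    qed
  qed
qed

end

theorem theorem1:
  fixes p :: nat
  assumes "prime p" and "odd p"
  shows "butson_hadamard (p^2) 6
           (kron (paley_mat p) (paley_mat p) + kron (ones_mat p) (1\<^sub>m p)
            + omega \<cdot>\<^sub>m kron (1\<^sub>m p) (ones_mat p))"
proof -
  define H where "H = kron (paley_mat p) (paley_mat p) + kron (ones_mat p) (1\<^sub>m p)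
            + omega \<cdot>\<^sub>m kron (1\<^sub>m p) (ones_mat p)"
  have sq: "p^2 = p*p" by (simp add: power2_eq_square)
  have car: "H \<in> carrier_mat (p*p) (p*p)"
    unfolding H_def kron_def paley_mat_def ones_mat_def by auto
  have idx: "H $$ (r,s) = hf p (r div p) (r mod p) (s div p) (s mod p)" if r: "r < p*p" and s: "s < p*p" for r s
  proof -
    have p0: "p > 0" using r by (cases "p = 0") auto
    have a: "r div p < p" "s div p < p" "r mod p < p" "s mod p < p"
      using r s p0 by (auto simp: less_mult_imp_div_less)
    show ?thesis
      unfolding H_def hf_def using r s a
      by (simp add: kron_def paley_mat_def ones_mat_def)
  qed
  have ent: "H $$ (r,s) \<in> {1, -1, omega, 1 + omega}" if r: "r < p*p" and s: "s < p*p" for r s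
  proof -
    have p0: "p > 0" using r by (cases "p = 0") auto
    have a: "r div p < p" "s div p < p" "r mod p < p" "s mod p < p"
      using r s p0 by (auto simp: less_mult_imp_div_less)
    show ?thesis unfolding idx[OF r s] using hf_vals[OF assms a(1,3,2,4)] .
  qed
  have norm: "cmod (H $$ (r,s)) = 1" if "r < p*p" "s < p*p" for r s
    using ent[OF that] omega_norm one_omega_norm by auto
  have pow: "(H $$ (r,s)) ^ 6 = 1" if "r < p*p" "s < p*p" for r s
    using ent[OF that] omega_pow6 one_omega_pow6 by auto
  have prod: "H * mat_adjoint H = of_nat (p*p) \<cdot>\<^sub>m 1\<^sub>m (p*p)"
  proof (rule eq_matI)
    fix r s assume r: "r < dim_row (of_nat (p*p) \<cdot>\<^sub>m 1\<^sub>m (p*p) :: complex mat)"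
      and s: "s < dim_col (of_nat (p*p) \<cdot>\<^sub>m 1\<^sub>m (p*p) :: complex mat)"
    then have r: "r < p*p" and s: "s < p*p" by auto
    have p0: "p > 0" using r by (cases "p = 0") auto
    have a: "r div p < p" "s div p < p" "r mod p < p" "s mod p < p"
      using r s p0 by (auto simp: less_mult_imp_div_less)
    have "(H * mat_adjoint H) $$ (r,s) = (\<Sum>t\<in>{0..<p*p}. H $$ (r,t) * cnj (H $$ (s,t)))"
      using car adj_carrier[OF car] r s
      by (simp add: scalar_prod_def adj_idx[OF car])
    also have "\<dots> = (\<Sum>j\<in>{0..<p}. \<Sum>l\<in>{0..<p}. H $$ (r, j*p+l) * cnj (H $$ (s, j*p+l)))"
      by (rule sum_pp)
    also have "\<dots> = (\<Sum>j\<in>{0..<p}. \<Sum>l\<in>{0..<p}.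
        hf p (r div p) (r mod p) j l * cnj (hf p (s div p) (s mod p) j l))"
    proof (intro sum.cong refl)
      fix j l assume j: "j \<in> {0..<p}" and l: "l \<in> {0..<p}"
      then have t: "j*p + l < p*p" using pp_h2 by auto
      have "(j*p+l) div p = j" "(j*p+l) mod p = l" using j l by auto
      then show "H $$ (r, j*p+l) * cnj (H $$ (s, j*p+l)) =
        hf p (r div p) (r mod p) j l * cnj (hf p (s div p) (s mod p) j l)"
        using idx[OF r t] idx[OF s t] by simp
    qed
    also have "\<dots> = (if r div p = s div p \<and> r mod p = s mod p then of_nat (p^2) else 0)"
      by (rule hf_orth[OF assms a(1,3,2,4)])
    also have "\<dots> = (of_nat (p*p) \<cdot>\<^sub>m 1\<^sub>m (p*p) :: complex mat) $$ (r,s)"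
    proof -
      have "(r div p = s div p \<and> r mod p = s mod p) \<longleftrightarrow> r = s"
        by (metis div_mult_mod_eq)
      then show ?thesis using r s by (simp add: sq)
    qed
    finally show "(H * mat_adjoint H) $$ (r,s) = (of_nat (p*p) \<cdot>\<^sub>m 1\<^sub>m (p*p) :: complex mat) $$ (r,s)" .
  next
    show "dim_row (H * mat_adjoint H) = dim_row (of_nat (p*p) \<cdot>\<^sub>m 1\<^sub>m (p*p) :: complex mat)"
      using car by simp
    show "dim_col (H * mat_adjoint H) = dim_col (of_nat (p*p) \<cdot>\<^sub>m 1\<^sub>m (p*p) :: complex mat)"
      using adj_carrier[OF car] by simp
  qed
  show ?thesis
    unfolding butson_hadamard_def complex_hadamard_def H_def[symmetric] sq
    using car norm pow prod by blast
qed


end
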